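(* Let $r \in \mathbb{Q}_{>0}$ be such that $S_r$ is atomic. (1) If $r < 1$, then $R(S_r) = \{1, \infty\}$; in particular $S_r$ is not fully elastic. (2) If $r \in \mathbb{N}$, then $R(S_r) = \{1\}$; in particular $S_r$ is fully elastic. (3) If $r \notin \mathbb{N}$ and $\mathsf{n}(r) = \mathsf{d}(r) + 1$, then $R(S_r) = \mathbb{Q}_{\ge 1}$; in particular $S_r$ is fully elastic.
   Context: For $q \in \mathbb{Q}_{>0}$, $\mathsf{n}(q),\mathsf{d}(q)$ are the positive coprime integers with $q = \mathsf{n}(q)/\mathsf{d}(q)$. $S_r$ is the additive submonoid of $(\mathbb{Q}_{\ge 0},+)$ generated by $\{r^n : n \in \mathbb{N}_0\}$; it is atomic exactly when $r=1$ or $\mathsf{n}(r)>1$. $\mathsf{L}(x)$ denotes the set of lengths of factorizations of $x$ into atoms. The elasticity of $x \ne 0$ is $\rho(x) = \sup \mathsf{L}(x)/\inf \mathsf{L}(x) \in \mathbb{Q}_{\ge 1} \cup \{\infty\}$, $\rho(0)=1$, and $\rho(S_r) = \sup\{\rho(x) : x \ne 0\}$. The set of elasticities is $R(S_r) = \{\rho(x) : x \in S_r\}$. A monoid $M$ is fully elastic if $R(M) = \mathbb{Q} \cap [1, \rho(M)]$ when $\infty \notin R(M)$, and $R(M) \setminus \{\infty\} = \mathbb{Q} \cap [1,\infty)$ when $\infty \in R(M)$. *)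

theory Defs
  imports Complex_Main "HOL-Library.Extended_Real" "HOL-Library.Multiset"
begin

definition numer :: "rat \<Rightarrow> int" where "numer q = fst (quotient_of q)"
definition denom :: "rat \<Rightarrow> int" where "denom q = snd (quotient_of q)"

inductive_set S :: "rat \<Rightarrow> rat set" for r :: rat where
  zero: "0 \<in> S r"
| add_pow: "x \<in> S r \<Longrightarrow> x + r ^ n \<in> S r"

definition atoms :: "rat set \<Rightarrow> rat set" where
  "atoms M = {a \<in> M. a \<noteq> 0 \<and> \<not> (\<exists>b\<in>M. \<exists>c\<in>M. b \<noteq> 0 \<and> c \<noteq> 0 \<and> a = b + c)}"

definition factorizations :: "rat set \<Rightarrow> rat \<Rightarrow> rat multiset set" where
  "factorizations M x = {z. set_mset z \<subseteq> atoms M \<and> sum_mset z = x}"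

definition lengths :: "rat set \<Rightarrow> rat \<Rightarrow> nat set" where
  "lengths M x = size ` factorizations M x"

definition atomic :: "rat set \<Rightarrow> bool" where
  "atomic M \<longleftrightarrow> (\<forall>x\<in>M. x \<noteq> 0 \<longrightarrow> lengths M x \<noteq> {})"

definition elasticity :: "rat set \<Rightarrow> rat \<Rightarrow> ereal" where
  "elasticity M x = (if x = 0 then 1 else
     (SUP l\<in>lengths M x. ereal (real l)) / ereal (real (Inf (lengths M x))))"

definition monoid_elasticity :: "rat set \<Rightarrow> ereal" where
  "monoid_elasticity M = (SUP x\<in>M - {0}. elasticity M x)"

definition elasticity_set :: "rat set \<Rightarrow> ereal set" where
  "elasticity_set M = elasticity M ` M"

definition fully_elastic :: "rat set \<Rightarrow> bool" where
  "fully_elastic M \<longleftrightarrow>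
     (if \<infinity> \<notin> elasticity_set M
      then elasticity_set M = {ereal (of_rat q) | q. 1 \<le> q \<and> ereal (of_rat q) \<le> monoid_elasticity M}
      else elasticity_set M - {\<infinity>} = {ereal (of_rat q) | q. 1 \<le> q})"

end

theory Submission
  imports Defs
begin

definition pw :: "rat \<Rightarrow> nat multiset \<Rightarrow> rat" where
  "pw r M = sum_mset (image_mset (\<lambda>i. r ^ i) M)"

lemma pw_empty[simp]: "pw r {#} = 0" by (simp add: pw_def)
lemma pw_add_mset[simp]: "pw r (add_mset i M) = r ^ i + pw r M" by (simp add: pw_def)
lemma pw_union[simp]: "pw r (M + N) = pw r M + pw r N" by (simp add: pw_def)

lemma S_iff: "x \<in> S r \<longleftrightarrow> (\<exists>M. x = pw r M)"
proof
  assume "x \<in> S r" then show "\<exists>M. x = pw r M"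
  proof induction
    case zero then show ?case by (metis pw_empty)
  next
    case (add_pow x n) then obtain M where "x = pw r M" by blast
    then have "x + r ^ n = pw r (add_mset n M)" by simp
    then show ?case by blast
  qed
next
  assume "\<exists>M. x = pw r M" then obtain M where x: "x = pw r M" by blast
  have "pw r M \<in> S r"
  proof (induction M)
    case empty then show ?case by (simp add: S.zero)
  next
    case (add x M) then show ?case using S.add_pow[of "pw r M" r x] by (simp add: add.commute)
  qed
  then show "x \<in> S r" using x by simp
qed

lemma pw_nonneg: "r > 0 \<Longrightarrow> pw r M \<ge> 0"
  by (induction M) auto

lemma pw_pos: "r > 0 \<Longrightarrow> M \<noteq> {#} \<Longrightarrow> pw r M > 0"
  by (induction M) (auto intro: add_pos_nonneg pw_nonneg)

lemma pw_eq0: "r > 0 \<Longrightarrow> pw r M = 0 \<longleftrightarrow> M = {#}"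
  using pw_pos by fastforce

lemma pow_in_S: "r ^ i \<in> S r"
  using S_iff[of "r^i" r] by (metis add.right_neutral pw_add_mset pw_empty)

lemma atoms_sub:
  assumes "r > 0" "a \<in> atoms (S r)" shows "\<exists>i. a = r ^ i"
proof -
  from assms(2) have aS: "a \<in> S r" and a0: "a \<noteq> 0"
    and nd: "\<not> (\<exists>b\<in>S r. \<exists>c\<in>S r. b \<noteq> 0 \<and> c \<noteq> 0 \<and> a = b + c)"
    unfolding atoms_def by auto
  obtain M where M: "a = pw r M" using aS S_iff by blast
  have "M \<noteq> {#}" using M a0 by auto
  then obtain i M' where M': "M = add_mset i M'" by (meson multiset_cases)
  show ?thesis
  proof (cases "M' = {#}")
    case True then show ?thesis using M M' by auto
  next
    case False
    have "r ^ i \<in> S r" "pw r M' \<in> S r" "r ^ i \<noteq> 0" "pw r M' \<noteq> 0"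
      using pow_in_S S_iff pw_eq0[OF assms(1)] False assms(1) by auto
    then show ?thesis using nd M M' by auto
  qed
qed

lemma exists_image_mset:
  "(\<forall>y\<in>#z. \<exists>i. y = f i) \<Longrightarrow> \<exists>M. z = image_mset f M"
proof (induction z)
  case empty then show ?case by simp
next
  case (add x z)
  then obtain M i where "z = image_mset f M" "x = f i" by auto
  then have "add_mset x z = image_mset f (add_mset i M)" by simp
  then show ?case by blast
qed

lemma fact_repr:
  assumes "r > 0" "z \<in> factorizations (S r) x"
  shows "\<exists>M. z = image_mset (\<lambda>i. r ^ i) M \<and> x = pw r M"
proof -
  have "\<forall>y\<in>#z. \<exists>i. y = r ^ i"
    using assms atoms_sub unfolding factorizations_def by blast
  then obtain M where "z = image_mset (\<lambda>i. r ^ i) M" using exists_image_mset by blast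
  moreover have "x = pw r M" using assms(2) calculation unfolding factorizations_def pw_def by auto
  ultimately show ?thesis by blast
qed

lemma fact_of_atoms:
  assumes "\<forall>i\<in>#M. r ^ i \<in> atoms (S r)"
  shows "image_mset (\<lambda>i. r ^ i) M \<in> factorizations (S r) (pw r M)"
  using assms unfolding factorizations_def pw_def by auto

lemma lengths_pos:
  assumes "x \<noteq> 0" "n \<in> lengths M x" shows "n > 0"
  using assms unfolding lengths_def factorizations_def
  by auto (metis gr0I size_eq_0_iff_empty sum_mset.empty)


definition vl :: "rat \<Rightarrow> nat \<Rightarrow> (nat \<Rightarrow> nat) \<Rightarrow> rat" where
  "vl r N c = (\<Sum>i<N. of_nat (c i) * r ^ i)"
definition lnn :: "nat \<Rightarrow> (nat \<Rightarrow> nat) \<Rightarrow> nat" where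
  "lnn N c = (\<Sum>i<N. c i)"

lemma pw_vl:
  assumes "set_mset M \<subseteq> {..<N}"
  shows "pw r M = vl r N (count M) \<and> size M = lnn N (count M)"
  using assms
proof (induction M)
  case empty then show ?case by (simp add: vl_def lnn_def)
next
  case (add a M)
  have aN: "a \<in> {..<N}" using add by auto
  have "vl r N (count (add_mset a M)) = (\<Sum>i<N. of_nat (count M i) * r ^ i + (if i = a then r ^ a else 0))"
    unfolding vl_def by (intro sum.cong) (auto simp: algebra_simps)
  also have "\<dots> = vl r N (count M) + r ^ a" using aN by (simp add: sum.distrib vl_def)
  finally have 1: "vl r N (count (add_mset a M)) = vl r N (count M) + r ^ a" .
  have "lnn N (count (add_mset a M)) = (\<Sum>i<N. count M i + (if i = a then 1 else 0))"
    unfolding lnn_def by (intro sum.cong) auto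
  also have "\<dots> = lnn N (count M) + 1" using aN by (simp add: sum.distrib lnn_def)
  finally have 2: "lnn N (count (add_mset a M)) = lnn N (count M) + 1" .
  have IH: "pw r M = vl r N (count M) \<and> size M = lnn N (count M)" using add by auto
  show ?case unfolding 1 2 using IH by simp
qed

lemma vl_int:
  fixes p q :: nat
  assumes "q > 0" "N \<le> Suc K"
  shows "vl (of_nat p / of_nat q) N c * of_nat q ^ K = of_nat (\<Sum>i<N. c i * p ^ i * q ^ (K - i))"
proof -
  have "vl (of_nat p / of_nat q) N c * of_nat q ^ K = (\<Sum>i<N. of_nat (c i) * (of_nat p / of_nat q) ^ i * of_nat q ^ K)"
    unfolding vl_def by (simp add: sum_distrib_right)
  also have "\<dots> = (\<Sum>i<N. of_nat (c i * p ^ i * q ^ (K - i)))"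
  proof (intro sum.cong refl)
    fix i assume "i \<in> {..<N}"
    then have "i \<le> K" using assms by auto
    then have "(of_nat q :: rat) ^ K = of_nat q ^ i * of_nat q ^ (K - i)"
      by (metis le_add_diff_inverse power_add)
    then show "of_nat (c i) * (of_nat p / of_nat q) ^ i * of_nat q ^ K = (of_nat (c i * p ^ i * q ^ (K - i)) :: rat)"
      using assms(1) by (simp add: power_divide field_simps)
  qed
  finally show ?thesis by simp
qed

lemma vl_Suc_top: "vl r (Suc N) c = vl r N c + of_nat (c N) * r ^ N"
  by (simp add: vl_def)
lemma lnn_Suc_top: "lnn (Suc N) c = lnn N c + c N"
  by (simp add: lnn_def)
lemma vl_Suc_bot: "vl r (Suc N) c = of_nat (c 0) + r * vl r N (\<lambda>i. c (Suc i))"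
  unfolding vl_def by (subst sum.lessThan_Suc_shift) (simp add: sum_distrib_left algebra_simps)
lemma lnn_Suc_bot: "lnn (Suc N) c = c 0 + lnn N (\<lambda>i. c (Suc i))"
  unfolding lnn_def by (subst sum.lessThan_Suc_shift) simp


lemma vl_add_delta:
  assumes "j < N"
  shows "vl r N (\<lambda>i. c i + (if i = j then e else 0)) = vl r N c + of_nat e * r ^ j"
    and "lnn N (\<lambda>i. c i + (if i = j then e else 0)) = lnn N c + e"
proof -
  have "vl r N (\<lambda>i. c i + (if i = j then e else 0)) = (\<Sum>i<N. of_nat (c i) * r ^ i + (if i = j then of_nat e * r ^ j else 0))"
    unfolding vl_def by (intro sum.cong) (auto simp: algebra_simps)
  also have "\<dots> = vl r N c + of_nat e * r ^ j" using assms by (simp add: sum.distrib vl_def)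
  finally show "vl r N (\<lambda>i. c i + (if i = j then e else 0)) = vl r N c + of_nat e * r ^ j" .
  have "lnn N (\<lambda>i. c i + (if i = j then e else 0)) = (\<Sum>i<N. c i + (if i = j then e else 0))"
    unfolding lnn_def by simp
  also have "\<dots> = lnn N c + e" using assms by (simp add: sum.distrib lnn_def)
  finally show "lnn N (\<lambda>i. c i + (if i = j then e else 0)) = lnn N c + e" .
qed

lemma min_len:
  fixes d :: nat
  assumes d: "d \<ge> 1" and r: "r = of_nat (d+1) / of_nat d"
  shows "vl r N c = vl r N w \<Longrightarrow> (\<forall>i<N. w i \<le> d) \<Longrightarrow> lnn N w \<le> lnn N c"
proof (induction N arbitrary: c w)
  case 0 then show ?case by (simp add: lnn_def)
next
  case (Suc N)
  define cs where "cs = (\<lambda>i. c (Suc i))"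
  define ws where "ws = (\<lambda>i. w (Suc i))"
  have eq: "of_nat (c 0) + r * vl r N cs = of_nat (w 0) + r * vl r N ws"
    using Suc.prems(1) by (simp add: vl_Suc_bot cs_def ws_def)
  have w0: "w 0 \<le> d" using Suc.prems(2) by auto
  have "vl r N cs * of_nat d ^ N = of_nat (\<Sum>i<N. cs i * (d+1) ^ i * d ^ (N - i))"
    unfolding r by (rule vl_int) (use d in auto)
  then obtain IA where IA: "vl r N cs * of_nat d ^ N = of_nat IA" by blast
  have "vl r N ws * of_nat d ^ N = of_nat (\<Sum>i<N. ws i * (d+1) ^ i * d ^ (N - i))"
    unfolding r by (rule vl_int) (use d in auto)
  then obtain IB where IB: "vl r N ws * of_nat d ^ N = of_nat IB" by blast
  have rd: "r * of_nat d = of_nat (d+1)" using r d by simp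
  have "(of_nat (c 0) + r * vl r N cs) * of_nat d ^ Suc N = (of_nat (w 0) + r * vl r N ws) * of_nat d ^ Suc N"
    using eq by simp
  then have "of_nat (c 0) * of_nat d ^ Suc N + (r * of_nat d) * (vl r N cs * of_nat d ^ N) =
             of_nat (w 0) * of_nat d ^ Suc N + (r * of_nat d) * (vl r N ws * of_nat d ^ N)"
    by (simp add: algebra_simps)
  then have "(of_nat (c 0 * d ^ Suc N + (d+1) * IA) :: rat) = of_nat (w 0 * d ^ Suc N + (d+1) * IB)"
    unfolding rd IA IB by (simp add: algebra_simps)
  then have neq: "c 0 * d ^ Suc N + (d+1) * IA = w 0 * d ^ Suc N + (d+1) * IB"
    using of_nat_eq_iff by blast
  then have "int (d+1) dvd (int (c 0) - int (w 0)) * int d ^ Suc N"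
  proof -
    have "(int (c 0) - int (w 0)) * int d ^ Suc N = int (d+1) * (int IB - int IA)"
      using arg_cong[OF neq, of int] by (simp add: algebra_simps)
    then show ?thesis by simp
  qed
  moreover have "coprime (int (d+1)) (int d ^ Suc N)"
  proof -
    have "coprime (d+1) d" by simp
    then have "coprime (int (d+1)) (int d)" by (simp only: coprime_int_iff)
    then show ?thesis by (simp add: coprime_power_right_iff)
  qed
  ultimately have "int (d+1) dvd (int (c 0) - int (w 0))"
    using coprime_dvd_mult_left_iff by blast
  then obtain t where t: "int (c 0) - int (w 0) = int (d+1) * t" by blast
  have "t \<ge> 0"
  proof (rule ccontr)
    assume "\<not> t \<ge> 0" then have "t \<le> -1" by simp
    then have "int (d+1) * t \<le> - int (d+1)" using mult_left_mono[of t "-1" "int (d+1)"] by simp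
    then show False using t w0 by linarith
  qed
  define tn where "tn = nat t"
  have "int (c 0) = int (w 0 + (d+1) * tn)" using t \<open>t \<ge> 0\<close> unfolding tn_def
    by (simp add: algebra_simps)
  then have c0: "c 0 = w 0 + (d+1) * tn" by (simp only: of_nat_eq_iff)
  show ?case
  proof (cases N)
    case 0
    then have "c 0 = w 0" using eq by (simp add: vl_def)
    then show ?thesis using 0 by (simp add: lnn_def)
  next
    case (Suc N')
    define c' where "c' = (\<lambda>i. cs i + (if i = 0 then d * tn else 0))"
    have c'v: "vl r N c' = vl r N cs + of_nat (d * tn)" and c'l: "lnn N c' = lnn N cs + d * tn"
      using vl_add_delta(1)[of 0 N r cs "d*tn"] vl_add_delta(2)[of 0 N cs "d*tn"] Suc by (auto simp: c'_def)
    have "r * vl r N c' = r * vl r N ws"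
    proof -
      have "r * vl r N c' = r * vl r N cs + (r * of_nat d) * of_nat tn" using c'v by (simp add: algebra_simps)
      also have "\<dots> = r * vl r N cs + of_nat ((d+1) * tn)" unfolding rd by (simp add: algebra_simps)
      also have "\<dots> = r * vl r N ws" using eq c0 by simp
      finally show ?thesis .
    qed
    then have "vl r N c' = vl r N ws" using r d by simp
    moreover have "\<forall>i<N. ws i \<le> d" using Suc.prems(2) by (auto simp: ws_def)
    ultimately have "lnn N ws \<le> lnn N c'" using Suc.IH by blast
    then show ?thesis using c'l c0 by (simp add: lnn_Suc_bot cs_def ws_def)
  qed
qed


lemma max_len:
  fixes d :: nat
  assumes d: "d \<ge> 1" and r: "r = of_nat (d+1) / of_nat d"
  shows "vl r (Suc N) c = vl r (Suc N) w \<Longrightarrow> (\<forall>i. 1 \<le> i \<and> i \<le> N \<longrightarrow> w i < d)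
         \<Longrightarrow> lnn (Suc N) c \<le> lnn (Suc N) w"
proof (induction N arbitrary: c w)
  case 0 then show ?case by (simp add: lnn_def vl_def)
next
  case (Suc N)
  define ct where "ct = c (Suc N)"
  define wt where "wt = w (Suc N)"
  have wt: "wt < d" using Suc.prems(2) by (auto simp: wt_def)
  have eq: "vl r (Suc N) c + of_nat ct * r ^ Suc N = vl r (Suc N) w + of_nat wt * r ^ Suc N"
    using Suc.prems(1) by (simp only: vl_Suc_top[of r "Suc N"] ct_def wt_def)
  have "vl r (Suc N) c * of_nat d ^ N = of_nat (\<Sum>i<Suc N. c i * (d+1) ^ i * d ^ (N - i))"
    unfolding r by (rule vl_int) (use d in auto)
  then obtain IA where IA: "vl r (Suc N) c * of_nat d ^ N = of_nat IA" by blast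
  have "vl r (Suc N) w * of_nat d ^ N = of_nat (\<Sum>i<Suc N. w i * (d+1) ^ i * d ^ (N - i))"
    unfolding r by (rule vl_int) (use d in auto)
  then obtain IB where IB: "vl r (Suc N) w * of_nat d ^ N = of_nat IB" by blast
  have rp: "r ^ Suc N * of_nat d ^ Suc N = of_nat ((d+1) ^ Suc N)"
  proof -
    have rd: "r * of_nat d = of_nat (d+1)" using r d by simp
    have "r ^ Suc N * of_nat d ^ Suc N = (r * of_nat d) ^ Suc N" by (simp only: power_mult_distrib)
    then show ?thesis unfolding rd by (simp only: of_nat_power)
  qed
  have "(vl r (Suc N) c + of_nat ct * r ^ Suc N) * of_nat d ^ Suc N
      = (vl r (Suc N) w + of_nat wt * r ^ Suc N) * of_nat d ^ Suc N" using eq by simp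
  then have "of_nat d * (vl r (Suc N) c * of_nat d ^ N) + of_nat ct * (r ^ Suc N * of_nat d ^ Suc N)
      = of_nat d * (vl r (Suc N) w * of_nat d ^ N) + of_nat wt * (r ^ Suc N * of_nat d ^ Suc N)"
    by (simp add: algebra_simps)
  then have "(of_nat (d * IA + ct * (d+1) ^ Suc N) :: rat) = of_nat (d * IB + wt * (d+1) ^ Suc N)"
    unfolding IA IB rp by (simp add: algebra_simps)
  then have neq: "d * IA + ct * (d+1) ^ Suc N = d * IB + wt * (d+1) ^ Suc N"
    using of_nat_eq_iff by blast
  have "int d dvd (int ct - int wt) * int (d+1) ^ Suc N"
  proof -
    have "(int ct - int wt) * int (d+1) ^ Suc N = int d * (int IB - int IA)"
      using arg_cong[OF neq, of int] by (simp add: algebra_simps)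
    then show ?thesis by simp
  qed
  moreover have "coprime (int d) (int (d+1) ^ Suc N)"
  proof -
    have "coprime d (d+1)" by simp
    then have "coprime (int d) (int (d+1))" by (simp only: coprime_int_iff)
    then show ?thesis by (simp add: coprime_power_right_iff)
  qed
  ultimately have "int d dvd (int ct - int wt)"
    using coprime_dvd_mult_left_iff by blast
  then obtain t where t: "int ct - int wt = int d * t" by blast
  have "t \<ge> 0"
  proof (rule ccontr)
    assume "\<not> t \<ge> 0" then have "t \<le> -1" by simp
    then have "int d * t \<le> - int d" using mult_left_mono[of t "-1" "int d"] by simp
    then show False using t wt by linarith
  qed
  define un where "un = nat t"
  have "int ct = int (wt + d * un)" using t \<open>t \<ge> 0\<close> unfolding un_def
    by (simp add: algebra_simps)
  then have ct: "ct = wt + d * un" by (simp only: of_nat_eq_iff)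
  define c' where "c' = (\<lambda>i. c i + (if i = N then (d+1) * un else 0))"
  have c'v: "vl r (Suc N) c' = vl r (Suc N) c + of_nat ((d+1) * un) * r ^ N"
    and c'l: "lnn (Suc N) c' = lnn (Suc N) c + (d+1) * un"
    using vl_add_delta(1)[of N "Suc N" r c "(d+1)*un"] vl_add_delta(2)[of N "Suc N" c "(d+1)*un"]
    by (auto simp: c'_def)
  have dr: "of_nat d * r ^ Suc N = of_nat (d+1) * r ^ N" using r d by simp
  have "vl r (Suc N) c' = vl r (Suc N) w"
  proof -
    have "vl r (Suc N) c' = vl r (Suc N) c + of_nat un * (of_nat d * r ^ Suc N)"
      unfolding c'v dr by (simp add: algebra_simps)
    also have "\<dots> = vl r (Suc N) w" using eq ct by (simp add: algebra_simps)
    finally show ?thesis .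
  qed
  moreover have "\<forall>i. 1 \<le> i \<and> i \<le> N \<longrightarrow> w i < d" using Suc.prems(2) by auto
  ultimately have "lnn (Suc N) c' \<le> lnn (Suc N) w" using Suc.IH by blast
  then show ?case using c'l ct by (simp add: lnn_Suc_top[of "Suc N"] ct_def wt_def)
qed


lemma SUP_fin_nat:
  fixes L :: "nat set"
  assumes "a \<in> L" "\<forall>l\<in>L. l \<le> a"
  shows "(SUP l\<in>L. ereal (real l)) = ereal (real a)"
  using assms by (intro SUP_eqI) auto

lemma Inf_fin_nat:
  fixes L :: "nat set"
  assumes "b \<in> L" "\<forall>l\<in>L. b \<le> l"
  shows "Inf L = b"
  using assms by (metis cInf_eq_minimum)

lemma ratio_ereal:
  fixes L :: "nat set"
  assumes "a \<in> L" "\<forall>l\<in>L. l \<le> a" "b \<in> L" "\<forall>l\<in>L. b \<le> l" "b > 0"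
  shows "(SUP l\<in>L. ereal (real l)) / ereal (real (Inf L)) = ereal (of_rat (of_nat a / of_nat b))"
proof -
  have "(SUP l\<in>L. ereal (real l)) / ereal (real (Inf L)) = ereal (real a) / ereal (real b)"
    using SUP_fin_nat[OF assms(1,2)] Inf_fin_nat[OF assms(3,4)] by simp
  also have "\<dots> = ereal (real a / real b)" using assms(5) by (simp add: divide_ereal_def divide_inverse)
  also have "real a / real b = of_rat (of_nat a / of_nat b)" by (simp add: of_rat_divide)
  finally show ?thesis .
qed

lemma fin_nat_minmax:
  fixes L :: "nat set"
  assumes "finite L" "L \<noteq> {}"
  shows "\<exists>a b. a \<in> L \<and> b \<in> L \<and> (\<forall>l\<in>L. l \<le> a \<and> b \<le> l)"
  using assms by (intro exI[of _ "Max L"] exI[of _ "Min L"]) auto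


lemma mem_le_sum_mset: "x \<in># (M :: nat multiset) \<Longrightarrow> x \<le> sum_mset M"
  by (metis le_add1 sum_mset.remove)

lemma len_cmp3:
  fixes d :: nat
  assumes d: "d \<ge> 2" and r: "r = of_nat (d+1) / of_nat d" and eq: "pw r M = pw r W"
  shows "(\<forall>i. count W i \<le> d) \<Longrightarrow> size W \<le> size M"
    and "(\<forall>i\<ge>1. count W i < d) \<Longrightarrow> size M \<le> size W"
proof -
  define N where "N = sum_mset M + sum_mset W"
  have sM: "set_mset M \<subseteq> {..<Suc N}" using mem_le_sum_mset unfolding N_def by fastforce
  have sW: "set_mset W \<subseteq> {..<Suc N}" using mem_le_sum_mset unfolding N_def by fastforce
  have v: "vl r (Suc N) (count M) = vl r (Suc N) (count W)"
    using pw_vl[OF sM, of r] pw_vl[OF sW, of r] eq by simp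
  have lM: "size M = lnn (Suc N) (count M)" using pw_vl[OF sM, of r] by simp
  have lW: "size W = lnn (Suc N) (count W)" using pw_vl[OF sW, of r] by simp
  show "(\<forall>i. count W i \<le> d) \<Longrightarrow> size W \<le> size M"
    using min_len[of d r "Suc N" "count M" "count W"] d r v lM lW by auto
  show "(\<forall>i\<ge>1. count W i < d) \<Longrightarrow> size M \<le> size W"
    using max_len[of d r N "count M" "count W"] d r v lM lW by auto
qed

lemma pw_ge_size: "r \<ge> 1 \<Longrightarrow> of_nat (size M) \<le> pw r M"
proof (induction M)
  case empty then show ?case by simp
next
  case (add x M)
  have r1: "r \<ge> 1" using add.prems .
  then have "1 \<le> r ^ x" by (simp add: one_le_power)
  from add_mono[OF this add.IH[OF r1]] show ?case by simp
qed

lemma atom3: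
  fixes d :: nat
  assumes d: "d \<ge> 2" and r: "r = of_nat (d+1) / of_nat d"
  shows "r ^ i \<in> atoms (S r)"
proof -
  have rpos: "r > 0" using r d by simp
  have "r ^ i \<noteq> 0" using rpos by simp
  moreover have "\<not> (\<exists>b\<in>S r. \<exists>c\<in>S r. b \<noteq> 0 \<and> c \<noteq> 0 \<and> r ^ i = b + c)"
  proof
    assume "\<exists>b\<in>S r. \<exists>c\<in>S r. b \<noteq> 0 \<and> c \<noteq> 0 \<and> r ^ i = b + c"
    then obtain b c where b: "b \<in> S r" "b \<noteq> 0" and c: "c \<in> S r" "c \<noteq> 0" and bc: "r ^ i = b + c" by blast
    obtain Mb where Mb: "b = pw r Mb" using b S_iff by blast
    obtain Mc where Mc: "c = pw r Mc" using c S_iff by blast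
    have "Mb \<noteq> {#}" "Mc \<noteq> {#}" using Mb Mc b c by auto
    then have sz: "size (Mb + Mc) \<ge> 2"
      by (metis One_nat_def Suc_leI add_mono nonempty_has_size one_add_one size_union)
    have "pw r (Mb + Mc) = pw r {#i#}" using bc Mb Mc by simp
    moreover have "\<forall>j\<ge>1. count {#i#} j < d" using d by auto
    ultimately have "size (Mb + Mc) \<le> size {#i#}" using len_cmp3(2)[OF d r] by blast
    then show False using sz by simp
  qed
  ultimately show ?thesis unfolding atoms_def using pow_in_S by blast
qed


lemma pw_replicate: "pw r (replicate_mset n i) = of_nat n * r ^ i"
  by (induction n) (auto simp: algebra_simps)

lemma count_mset_upt: "count (mset [a..<b]) i = (if a \<le> i \<and> i < b then 1 else 0)"
  by (induction b) (auto simp: not_less_eq_eq)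

lemma chain:
  fixes d :: nat
  assumes d: "d \<ge> 1" and r: "r = of_nat (d+1) / of_nat d" and k: "k \<ge> 1"
  shows "of_nat d * r ^ k = of_nat (d+1) + pw r (mset [1..<k])"
  using k
proof (induction k)
  case 0 then show ?case by simp
next
  case (Suc k)
  have rd: "of_nat d * r = of_nat (d+1)" using r d by simp
  show ?case
  proof (cases "k = 0")
    case True then show ?thesis using rd by simp
  next
    case False
    then have IH: "of_nat d * r ^ k = of_nat (d+1) + pw r (mset [1..<k])" using Suc by auto
    have "of_nat d * r ^ Suc k = (of_nat d * r) * r ^ k" by (simp add: algebra_simps)
    also have "\<dots> = of_nat d * r ^ k + r ^ k" unfolding rd by (simp add: algebra_simps)
    also have "\<dots> = of_nat (d+1) + pw r (mset [1..<Suc k])" using IH False by simp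
    finally show ?thesis .
  qed
qed

lemma part3_general:
  fixes d :: nat
  assumes d: "d \<ge> 2" and r: "r = of_nat (d+1) / of_nat d" and at: "atomic (S r)"
    and x: "x \<in> S r" "x \<noteq> 0"
  shows "\<exists>q\<ge>1. elasticity (S r) x = ereal (of_rat q)"
proof -
  have rpos: "r > 0" using r d by simp
  have r1: "r \<ge> 1" unfolding r using d by (simp add: le_divide_eq)
  define L where "L = lengths (S r) x"
  have ne: "L \<noteq> {}" using at x unfolding atomic_def L_def by auto
  have bnd: "\<forall>n\<in>L. n \<le> nat \<lceil>x\<rceil>"
  proof
    fix n assume "n \<in> L"
    then obtain z where z: "z \<in> factorizations (S r) x" "n = size z"
      unfolding L_def lengths_def by auto
    obtain M where M: "z = image_mset (\<lambda>i. r ^ i) M" "x = pw r M" using fact_repr[OF rpos z(1)] by blast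
    have "of_nat n \<le> x" using pw_ge_size[OF r1, of M] M z(2) by simp
    then have "(of_int (int n) :: rat) \<le> of_int \<lceil>x\<rceil>" using le_of_int_ceiling[of x] by (simp del: le_of_int_ceiling)
    then have "int n \<le> \<lceil>x\<rceil>" by (simp only: of_int_le_iff)
    then show "n \<le> nat \<lceil>x\<rceil>" by (simp add: le_nat_iff)
  qed
  then have "L \<subseteq> {..nat \<lceil>x\<rceil>}" by auto
  then have fin: "finite L" using finite_subset by blast
  obtain a b where ab: "a \<in> L" "b \<in> L" "\<forall>l\<in>L. l \<le> a \<and> b \<le> l"
    using fin_nat_minmax[OF fin ne] by blast
  have b0: "b > 0" using lengths_pos[OF x(2)] ab(2) unfolding L_def by blast
  have "elasticity (S r) x = ereal (of_rat (of_nat a / of_nat b))"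
    using ratio_ereal[of a L b] ab b0 x(2) unfolding elasticity_def L_def by auto
  moreover have "(1::rat) \<le> of_nat a / of_nat b" using ab b0 by simp
  ultimately show ?thesis by blast
qed


lemma part3_hit:
  fixes d :: nat
  assumes d: "d \<ge> 2" and r: "r = of_nat (d+1) / of_nat d" and q: "q > 1"
  shows "\<exists>x\<in>S r. x \<noteq> 0 \<and> elasticity (S r) x = ereal (of_rat q)"
proof -
  have rpos: "r > 0" using r d by simp
  obtain p s where ps: "quotient_of q = (p, s)" by (cases "quotient_of q")
  have s0: "s > 0" using quotient_of_denom_pos[OF ps] .
  have qd: "q = of_int p / of_int s" using quotient_of_div[OF ps] .
  have "of_int s < (of_int p :: rat)" using q s0 unfolding qd by (simp add: less_divide_eq)
  then have ps': "s < p" by simp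
  define pn where "pn = nat p"
  define sn where "sn = nat s"
  have sn1: "sn \<ge> 1" and psn: "sn < pn" using s0 ps' unfolding pn_def sn_def by auto
  have qn: "q = of_nat pn / of_nat sn" using qd s0 ps' unfolding pn_def sn_def by simp
  define k where "k = (pn - sn) * d"
  define m where "m = (sn - 1) * d"
  have k1: "k \<ge> 1" using psn d unfolding k_def by simp
  define U where "U = mset [Suc k..<Suc (k+m)]"
  define Wmin where "Wmin = replicate_mset d k + U"
  define Wmax where "Wmax = replicate_mset (d+1) 0 + mset [1..<k] + U"
  have eqW: "pw r Wmin = pw r Wmax"
  proof -
    have 1: "pw r Wmin = of_nat d * r ^ k + pw r U" by (simp only: Wmin_def pw_union pw_replicate)
    have 2: "pw r Wmax = of_nat (d+1) + pw r (mset [1..<k]) + pw r U"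
      by (simp only: Wmax_def pw_union pw_replicate power_0 mult_1_right)
    have d1: "d \<ge> 1" using d by simp
    show ?thesis unfolding 1 2 chain[OF d1 r k1] by simp
  qed
  have cU: "count U i = (if Suc k \<le> i \<and> i < Suc (k+m) then 1 else 0)" for i
    unfolding U_def by (rule count_mset_upt)
  have cmin: "\<forall>i. count Wmin i \<le> d"
  proof
    fix i
    have "count Wmin i = (if i = k then d else 0) + (if Suc k \<le> i \<and> i < Suc (k+m) then 1 else 0)"
      unfolding Wmin_def by (simp only: count_union cU count_replicate_mset)
    then show "count Wmin i \<le> d" using d by (cases "i = k") auto
  qed
  have cmax: "\<forall>i\<ge>1. count Wmax i < d"
  proof (intro allI impI)
    fix i :: nat assume "i \<ge> 1"
    have c1: "count (mset [1..<k]) i = (if 1 \<le> i \<and> i < k then 1 else 0)" by (rule count_mset_upt)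
    have "count Wmax i = (if 1 \<le> i \<and> i < k then 1 else 0) + (if Suc k \<le> i \<and> i < Suc (k+m) then 1 else 0)"
      using \<open>i \<ge> 1\<close> unfolding Wmax_def by (simp only: count_union c1 cU count_replicate_mset) simp
    then show "count Wmax i < d" using d by (cases "i < k") auto
  qed
  have sU: "size U = m" by (simp add: U_def)
  define b where "b = sn - 1"
  define a where "a = pn - sn - 1"
  have ab: "sn = Suc b" "pn = sn + Suc a" using sn1 psn by (auto simp: a_def b_def)
  have szmin: "size Wmin = sn * d" unfolding Wmin_def using sU unfolding m_def ab by simp
  have "size (mset [1..<k]) = k - 1" by simp
  then have "size Wmax = d + k + m" unfolding Wmax_def using sU k1 by simp
  also have "d + k + m = pn * d" unfolding k_def m_def ab by (simp add: algebra_simps)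
  finally have szmax: "size Wmax = pn * d" .
  define x where "x = pw r Wmin"
  have xS: "x \<in> S r" unfolding x_def using S_iff by blast
  have Wne: "Wmin \<noteq> {#}" using szmin sn1 d by auto
  have x0: "x \<noteq> 0" unfolding x_def using pw_eq0[OF rpos] Wne by simp
  have at: "\<forall>i\<in>#M. r ^ i \<in> atoms (S r)" for M using atom3[OF d r] by blast
  define L where "L = lengths (S r) x"
  have inmin: "size Wmin \<in> L" unfolding L_def lengths_def x_def
    using fact_of_atoms[OF at[of Wmin]] by (metis image_eqI size_image_mset)
  have inmax: "size Wmax \<in> L" unfolding L_def lengths_def x_def eqW
    using fact_of_atoms[OF at[of Wmax]] by (metis image_eqI size_image_mset)
  have bnds: "\<forall>l\<in>L. l \<le> size Wmax \<and> size Wmin \<le> l"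
  proof
    fix l assume "l \<in> L"
    then obtain z where z: "z \<in> factorizations (S r) x" "l = size z"
      unfolding L_def lengths_def by auto
    obtain M where M: "z = image_mset (\<lambda>i. r ^ i) M" "x = pw r M" using fact_repr[OF rpos z(1)] by blast
    have "size Wmin \<le> size M" using len_cmp3(1)[OF d r, of M Wmin] M(2) cmin unfolding x_def by simp
    moreover have "size M \<le> size Wmax" using len_cmp3(2)[OF d r, of M Wmax] M(2) cmax eqW unfolding x_def by simp
    ultimately show "l \<le> size Wmax \<and> size Wmin \<le> l" using z M by simp
  qed
  have b0: "size Wmin > 0" using szmin sn1 d by simp
  have "elasticity (S r) x = ereal (of_rat (of_nat (size Wmax) / of_nat (size Wmin)))"
    using ratio_ereal[of "size Wmax" L "size Wmin"] inmin inmax bnds b0 x0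
    unfolding elasticity_def L_def by auto
  also have "of_nat (size Wmax) / of_nat (size Wmin) = q"
    unfolding szmin szmax qn using d by simp
  finally show ?thesis using xS x0 by blast
qed


lemma elasticity_zero[simp]: "elasticity M 0 = 1" by (simp add: elasticity_def)

lemma part3:
  fixes d :: nat
  assumes d: "d \<ge> 2" and r: "r = of_nat (d+1) / of_nat d" and at: "atomic (S r)"
  shows "elasticity_set (S r) = {ereal (of_rat q) | q. 1 \<le> q} \<and> fully_elastic (S r)"
proof -
  have E: "elasticity_set (S r) = {ereal (of_rat q) | q. 1 \<le> q}"
  proof (intro equalityI subsetI)
    fix e assume "e \<in> elasticity_set (S r)"
    then obtain x where x: "x \<in> S r" "e = elasticity (S r) x" unfolding elasticity_set_def by auto
    show "e \<in> {ereal (of_rat q) | q. 1 \<le> q}"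
    proof (cases "x = 0")
      case True then show ?thesis using x by (auto intro!: exI[of _ 1])
    next
      case False then show ?thesis using part3_general[OF d r at x(1)] x by auto
    qed
  next
    fix e assume "e \<in> {ereal (of_rat q) | q. 1 \<le> q}"
    then obtain q where q: "e = ereal (of_rat q)" "1 \<le> q" by auto
    show "e \<in> elasticity_set (S r)"
    proof (cases "q = 1")
      case True then show ?thesis using q S.zero unfolding elasticity_set_def
        by (metis elasticity_zero image_eqI of_rat_1 one_ereal_def)
    next
      case False then have "q > 1" using q by simp
      then obtain x where "x \<in> S r" "elasticity (S r) x = ereal (of_rat q)" using part3_hit[OF d r] by blast
      then show ?thesis using q unfolding elasticity_set_def by (metis image_eqI)
    qed
  qed
  have ninf: "\<infinity> \<notin> elasticity_set (S r)" unfolding E by auto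
  have "elasticity_set (S r) = {ereal (of_rat q) | q. 1 \<le> q \<and> ereal (of_rat q) \<le> monoid_elasticity (S r)}"
  proof -
    have "ereal (of_rat q) \<le> monoid_elasticity (S r)" if "1 \<le> q" for q
    proof -
      have "max q 2 > 1" by simp
      then obtain x where x: "x \<in> S r" "x \<noteq> 0" "elasticity (S r) x = ereal (of_rat (max q 2))"
        using part3_hit[OF d r] by blast
      have "ereal (of_rat q) \<le> ereal (of_rat (max q 2))" by (simp add: of_rat_less_eq)
      also have "\<dots> \<le> monoid_elasticity (S r)" unfolding monoid_elasticity_def
        using x by (metis DiffI SUP_upper empty_iff insert_iff)
      finally show ?thesis .
    qed
    then show ?thesis unfolding E by blast
  qed
  then have "fully_elastic (S r)" using ninf unfolding fully_elastic_def by simp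
  then show ?thesis using E by simp
qed


lemma count_image_inj: "inj f \<Longrightarrow> count (image_mset f M) (f x) = count M x"
  by (induction M) (auto simp: inj_eq)

lemma pw_replicate0: "pw r (replicate_mset k 0) = of_nat k"
  by (simp add: pw_replicate)

lemma nat_in_S: "of_nat k \<in> S r"
  using S_iff pw_replicate0 by metis

lemma sum_ones: "set_mset z \<subseteq> {1} \<Longrightarrow> sum_mset z = (of_nat (size z) :: rat)"
  by (induction z) auto

lemma SUP_unbounded:
  fixes L :: "nat set"
  assumes "\<forall>n. \<exists>l\<in>L. l \<ge> n"
  shows "(SUP l\<in>L. ereal (real l)) = \<infinity>"
proof -
  have "\<exists>i\<in>L. x < ereal (real i)" if "x < \<infinity>" for x :: ereal
  proof (cases x)
    case (real y)
    obtain n :: nat where "y < real n" using reals_Archimedean2 by blast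
    then obtain l where "l \<in> L" "l \<ge> n" using assms by blast
    then have "y < real l" using \<open>y < real n\<close> by linarith
    then show ?thesis using real \<open>l \<in> L\<close> by auto
  next
    case PInf then show ?thesis using that by simp
  next
    case MInf
    obtain l where "l \<in> L" using assms by blast
    then show ?thesis using MInf by auto
  qed
  then show ?thesis by (simp add: top_ereal_def[symmetric])
qed

lemma part2:
  fixes r :: rat
  assumes rN: "r \<in> \<nat>" and rpos: "r > 0" and at: "atomic (S r)"
  shows "elasticity_set (S r) = {1} \<and> fully_elastic (S r)"
proof -
  from rN obtain n where n: "r = of_nat n" by (rule Nats_cases)
  have Sn: "x \<in> \<nat>" if xS: "x \<in> S r" for x
  proof -
    obtain M where "x = pw r M" using S_iff[THEN iffD1, OF xS] by blast
    moreover have "pw r M \<in> \<nat>"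
    proof (induction M)
      case empty then show ?case by simp
    next
      case (add i M)
      have "r ^ i = of_nat (n ^ i)" unfolding n by simp
      then have "r ^ i \<in> \<nat>" by (metis of_nat_in_Nats)
      then show ?case using add Nats_add by simp
    qed
    ultimately show ?thesis by simp
  qed
  have atoms1: "a = 1" if aat: "a \<in> atoms (S r)" for a
  proof (rule ccontr)
    assume a1: "a \<noteq> 1"
    obtain i where ai: "a = r ^ i" using atoms_sub[OF rpos aat] by blast
    have "a = of_nat (n ^ i)" using ai n by simp
    moreover have "a \<noteq> 0" using aat unfolding atoms_def by auto
    ultimately have "n ^ i \<noteq> 0" "n ^ i \<noteq> 1" using a1 by (metis of_nat_0, metis of_nat_1)
    then have ge: "n ^ i \<ge> 2" by linarith
    have "a = 1 + of_nat (n ^ i - 1)" using \<open>a = of_nat (n ^ i)\<close> ge by (simp add: of_nat_diff)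
    moreover have "(1::rat) \<in> S r" using nat_in_S[of 1 r] by simp
    moreover have "of_nat (n ^ i - 1) \<in> S r" by (rule nat_in_S)
    moreover have "(of_nat (n ^ i - 1) :: rat) \<noteq> 0"
    proof -
      have "n ^ i - 1 \<noteq> 0" using ge by linarith
      then show ?thesis by (metis of_nat_eq_0_iff)
    qed
    moreover have "\<not> (\<exists>b\<in>S r. \<exists>c\<in>S r. b \<noteq> 0 \<and> c \<noteq> 0 \<and> a = b + c)"
      using aat unfolding atoms_def by simp
    ultimately show False using one_neq_zero by blast
  qed
  have el1: "elasticity (S r) x = 1" if xS: "x \<in> S r" for x
  proof (cases "x = 0")
    case True then show ?thesis by (simp add: elasticity_def)
  next
    case False
    define L where "L = lengths (S r) x"
    have ne: "L \<noteq> {}" using at xS False unfolding atomic_def L_def by blast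
    have eq: "of_nat l = x" if "l \<in> L" for l
    proof -
      obtain z where z: "z \<in> factorizations (S r) x" "l = size z" using \<open>l \<in> L\<close> unfolding L_def lengths_def by auto
      then have "set_mset z \<subseteq> {1}" using atoms1 unfolding factorizations_def by auto
      then show ?thesis using sum_ones z unfolding factorizations_def by auto
    qed
    obtain l where l: "l \<in> L" using ne by blast
    have all: "\<forall>l'\<in>L. l' = l" using eq l by (metis of_nat_eq_iff)
    have l0: "l > 0" using lengths_pos[OF False] l unfolding L_def by blast
    have b1: "\<forall>l'\<in>L. l' \<le> l" "\<forall>l'\<in>L. l \<le> l'" using all by simp_all
    have "elasticity (S r) x = (SUP l\<in>L. ereal (real l)) / ereal (real (Inf L))"
      using False unfolding elasticity_def L_def by simp
    also have "\<dots> = ereal (of_rat (of_nat l / of_nat l))"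
      by (rule ratio_ereal[OF l b1(1) l b1(2) l0])
    also have "(of_nat l / of_nat l :: rat) = 1" using l0 by simp
    finally show ?thesis by simp
  qed
  have E: "elasticity_set (S r) = {1}"
    unfolding elasticity_set_def using el1 S.zero by auto
  have ME: "monoid_elasticity (S r) = 1"
  proof -
    have "(1::rat) \<in> S r - {0}" using nat_in_S[of 1 r] by simp
    then show ?thesis unfolding monoid_elasticity_def using el1
      by (metis (no_types, lifting) DiffD1 SUP_cong SUP_const empty_iff)
  qed
  have "{ereal (of_rat q) | q. 1 \<le> q \<and> ereal (of_rat q) \<le> monoid_elasticity (S r)} = {1}"
  proof (intro equalityI subsetI)
    fix e assume "e \<in> {ereal (of_rat q) | q. 1 \<le> q \<and> ereal (of_rat q) \<le> monoid_elasticity (S r)}"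
    then obtain q where q: "e = ereal (of_rat q)" "1 \<le> q" "ereal (of_rat q) \<le> 1" using ME by auto
    then have "of_rat q \<le> (1::real)" by simp
    then have "q \<le> 1" by (metis of_rat_1 of_rat_less_eq)
    then show "e \<in> {1}" using q by simp
  next
    fix e assume "e \<in> {1::ereal}"
    then show "e \<in> {ereal (of_rat q) | q. 1 \<le> q \<and> ereal (of_rat q) \<le> monoid_elasticity (S r)}"
      using ME by (auto intro!: exI[of _ 1])
  qed
  then show ?thesis using E unfolding fully_elastic_def by simp
qed


lemma uniq:
  fixes a b :: nat
  assumes b: "b > 0" and a: "a > 0" and cop: "coprime a b" and r: "r = of_nat a / of_nat b"
  shows "vl r N c = vl r N w \<Longrightarrow> (\<forall>i<N. c i < a \<and> w i < a) \<Longrightarrow> \<forall>i<N. c i = w i"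
proof (induction N arbitrary: c w)
  case 0 then show ?case by simp
next
  case (Suc N)
  define cs where "cs = (\<lambda>i. c (Suc i))"
  define ws where "ws = (\<lambda>i. w (Suc i))"
  have eq: "of_nat (c 0) + r * vl r N cs = of_nat (w 0) + r * vl r N ws"
    using Suc.prems(1) by (simp add: vl_Suc_bot cs_def ws_def)
  have c0: "c 0 < a" and w0: "w 0 < a" using Suc.prems(2) by auto
  have "vl r N cs * of_nat b ^ N = of_nat (\<Sum>i<N. cs i * a ^ i * b ^ (N - i))"
    unfolding r by (rule vl_int) (use b in auto)
  then obtain IA where IA: "vl r N cs * of_nat b ^ N = of_nat IA" by blast
  have "vl r N ws * of_nat b ^ N = of_nat (\<Sum>i<N. ws i * a ^ i * b ^ (N - i))"
    unfolding r by (rule vl_int) (use b in auto)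
  then obtain IB where IB: "vl r N ws * of_nat b ^ N = of_nat IB" by blast
  have rb: "r * of_nat b = of_nat a" using r b by simp
  have "(of_nat (c 0) + r * vl r N cs) * of_nat b ^ Suc N = (of_nat (w 0) + r * vl r N ws) * of_nat b ^ Suc N"
    using eq by simp
  then have "of_nat (c 0) * of_nat b ^ Suc N + (r * of_nat b) * (vl r N cs * of_nat b ^ N) =
             of_nat (w 0) * of_nat b ^ Suc N + (r * of_nat b) * (vl r N ws * of_nat b ^ N)"
    by (simp add: algebra_simps)
  then have "(of_nat (c 0 * b ^ Suc N + a * IA) :: rat) = of_nat (w 0 * b ^ Suc N + a * IB)"
    unfolding rb IA IB by (simp add: algebra_simps)
  then have neq: "c 0 * b ^ Suc N + a * IA = w 0 * b ^ Suc N + a * IB"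
    using of_nat_eq_iff by blast
  have "int a dvd (int (c 0) - int (w 0)) * int b ^ Suc N"
  proof -
    have "(int (c 0) - int (w 0)) * int b ^ Suc N = int a * (int IB - int IA)"
      using arg_cong[OF neq, of int] by (simp add: algebra_simps)
    then show ?thesis by simp
  qed
  moreover have "coprime (int a) (int b ^ Suc N)"
  proof -
    have "coprime (int a) (int b)" using cop by (simp only: coprime_int_iff)
    then show ?thesis by (simp add: coprime_power_right_iff)
  qed
  ultimately have dv: "int a dvd (int (c 0) - int (w 0))"
    using coprime_dvd_mult_left_iff by blast
  have c0w0: "c 0 = w 0"
  proof (rule ccontr)
    assume ne: "c 0 \<noteq> w 0"
    have "\<bar>int (c 0) - int (w 0)\<bar> < int a" using c0 w0 by linarith
    moreover have "int (c 0) - int (w 0) \<noteq> 0" using ne by simp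
    ultimately show False using dv
      by (metis abs_of_nat dvd_imp_le_int int_ops(1) linorder_not_le of_nat_less_iff)
  qed
  have "r * vl r N cs = r * vl r N ws" using eq c0w0 by simp
  then have "vl r N cs = vl r N ws" using r a b by simp
  moreover have "\<forall>i<N. cs i < a \<and> ws i < a" using Suc.prems(2) by (auto simp: cs_def ws_def)
  ultimately have "\<forall>i<N. cs i = ws i" using Suc.IH by blast
  then show ?case using c0w0 unfolding cs_def ws_def
    by (metis less_Suc_eq_0_disj)
qed


lemma pw_ge_elem: "r > 0 \<Longrightarrow> j \<in># M \<Longrightarrow> M \<noteq> {#j#} \<Longrightarrow> pw r M > r ^ j"
proof -
  assume r: "r > 0" and j: "j \<in># M" and ne: "M \<noteq> {#j#}"
  obtain M' where M': "M = add_mset j M'" using j by (metis insert_DiffM)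
  have "M' \<noteq> {#}" using ne M' by auto
  then have "pw r M' > 0" using pw_pos[OF r] by blast
  then show ?thesis using M' by simp
qed

lemma atom1:
  fixes a b :: nat
  assumes a2: "a \<ge> 2" and ab: "a < b" and cop: "coprime a b" and r: "r = of_nat a / of_nat b"
  shows "r ^ i \<in> atoms (S r)"
proof -
  have b0: "b > 0" using ab by simp
  have rpos: "r > 0" and r1: "r < 1" using r a2 ab by auto
  have "r ^ i \<noteq> 0" using rpos by simp
  moreover have "\<not> (\<exists>p\<in>S r. \<exists>c\<in>S r. p \<noteq> 0 \<and> c \<noteq> 0 \<and> r ^ i = p + c)"
  proof
    assume "\<exists>p\<in>S r. \<exists>c\<in>S r. p \<noteq> 0 \<and> c \<noteq> 0 \<and> r ^ i = p + c"
    then obtain p c where p: "p \<in> S r" "p \<noteq> 0" and c: "c \<in> S r" "c \<noteq> 0" and pc: "r ^ i = p + c" by blast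
    obtain Mp where Mp: "p = pw r Mp" using p(1) S_iff by blast
    obtain Mc where Mc: "c = pw r Mc" using c(1) S_iff by blast
    have ne: "Mp \<noteq> {#}" "Mc \<noteq> {#}" using Mp Mc p c by auto
    define M where "M = Mp + Mc"
    have pwM: "pw r M = r ^ i" using pc Mp Mc M_def by simp
    have sz: "size M \<ge> 2" unfolding M_def using ne
      by (metis One_nat_def Suc_leI add_mono nonempty_has_size one_add_one size_union)
    show False
    proof (cases "\<exists>j\<in>#M. j \<le> i")
      case True
      then obtain j where j: "j \<in># M" "j \<le> i" by blast
      have "M \<noteq> {#j#}" using sz by auto
      then have "pw r M > r ^ j" using pw_ge_elem[OF rpos j(1)] by blast
      moreover have "r ^ i \<le> r ^ j" using j(2) rpos r1 by (simp add: power_decreasing)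
      ultimately show False using pwM by simp
    next
      case False
      then have gt: "\<forall>j\<in>#M. i < j" by auto
      define K where "K = sum_mset M + i"
      have sM: "set_mset M \<subseteq> {..<Suc K}" using mem_le_sum_mset unfolding K_def by fastforce
      have sI: "set_mset {#i#} \<subseteq> {..<Suc K}" unfolding K_def by auto
      have iK: "i \<le> K" unfolding K_def by simp
      have v: "vl r (Suc K) (count M) = vl r (Suc K) (count {#i#})"
        using pw_vl[OF sM, of r] pw_vl[OF sI, of r] pwM by simp
      have e1: "vl r (Suc K) (count M) * of_nat b ^ K = of_nat (\<Sum>j<Suc K. count M j * a ^ j * b ^ (K - j))"
        unfolding r by (rule vl_int) (use b0 in auto)
      have e2: "vl r (Suc K) (count {#i#}) * of_nat b ^ K = of_nat (\<Sum>j<Suc K. count {#i#} j * a ^ j * b ^ (K - j))"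
        unfolding r by (rule vl_int) (use b0 in auto)
      have "(\<Sum>j<Suc K. count {#i#} j * a ^ j * b ^ (K - j)) = (\<Sum>j<Suc K. if j = i then a ^ i * b ^ (K - i) else 0)"
        by (intro sum.cong) auto
      also have "\<dots> = a ^ i * b ^ (K - i)" using iK by simp
      finally have e3: "(\<Sum>j<Suc K. count {#i#} j * a ^ j * b ^ (K - j)) = a ^ i * b ^ (K - i)" .
      have eqn: "(\<Sum>j<Suc K. count M j * a ^ j * b ^ (K - j)) = a ^ i * b ^ (K - i)"
        using e1 e2 e3 v by (metis of_nat_eq_iff)
      have "a ^ Suc i dvd (\<Sum>j<Suc K. count M j * a ^ j * b ^ (K - j))"
      proof (rule dvd_sum)
        fix j assume "j \<in> {..<Suc K}"
        show "a ^ Suc i dvd count M j * a ^ j * b ^ (K - j)"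
        proof (cases "count M j = 0")
          case True then show ?thesis by simp
        next
          case False
          then have "i < j" using gt by (simp add: not_in_iff)
          then have "a ^ Suc i dvd a ^ j" by (intro le_imp_power_dvd) simp
          then show ?thesis by (metis dvd_mult dvd_mult2)
        qed
      qed
      then have "a ^ i * a dvd a ^ i * b ^ (K - i)" using eqn by (simp add: mult.commute)
      then have "a dvd b ^ (K - i)" using a2 by (simp add: nat_mult_dvd_cancel_disj)
      moreover have "coprime a (b ^ (K - i))" using cop by (simp add: coprime_power_right_iff)
      ultimately have "is_unit a" by (metis coprime_common_divisor dvd_refl)
      then show False using a2 by simp
    qed
  qed
  ultimately show ?thesis unfolding atoms_def using pow_in_S by blast
qed


lemma no_atoms:
  fixes b :: nat
  assumes b: "b \<ge> 2" and r: "r = 1 / of_nat b"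
  shows "atoms (S r) = {}"
proof (rule ccontr)
  assume "atoms (S r) \<noteq> {}"
  then obtain x where x: "x \<in> atoms (S r)" by blast
  have rpos: "r > 0" using r b by simp
  obtain i where i: "x = r ^ i" using atoms_sub[OF rpos x] by blast
  have br: "of_nat b * r = 1" using r b by simp
  have "r ^ i = r ^ Suc i + pw r (replicate_mset (b - 1) (Suc i))"
  proof -
    have "r ^ i = (of_nat b * r) * r ^ i" using br by simp
    also have "\<dots> = of_nat (1 + (b - 1)) * r ^ Suc i" using b by (simp add: algebra_simps)
    also have "\<dots> = r ^ Suc i + of_nat (b - 1) * r ^ Suc i" by (simp add: algebra_simps)
    finally show ?thesis by (simp add: pw_replicate)
  qed
  moreover have "r ^ Suc i \<in> S r" by (rule pow_in_S)
  moreover have "pw r (replicate_mset (b - 1) (Suc i)) \<in> S r" using S_iff by blast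
  moreover have "r ^ Suc i \<noteq> 0" using rpos by simp
  moreover have "pw r (replicate_mset (b - 1) (Suc i)) \<noteq> 0" using pw_eq0[OF rpos] b by simp
  moreover have "\<not> (\<exists>p\<in>S r. \<exists>c\<in>S r. p \<noteq> 0 \<and> c \<noteq> 0 \<and> x = p + c)"
    using x unfolding atoms_def by simp
  ultimately show False using i by blast
qed

lemma grow:
  fixes a b :: nat
  assumes ab: "0 < a" "a < b" and r: "r = of_nat a / of_nat b" and M: "a \<le> count M i"
  shows "\<exists>M'. pw r M' = pw r M \<and> size M' > size M \<and> a \<le> count M' (Suc i)"
proof -
  define R where "R = replicate_mset a i"
  have sub: "R \<subseteq># M" unfolding R_def subseteq_mset_def using M by simp
  define M' where "M' = (M - R) + replicate_mset b (Suc i)"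
  have MR: "M = (M - R) + R" using sub by simp
  have "pw r (replicate_mset b (Suc i)) = pw r R"
  proof -
    have "pw r (replicate_mset b (Suc i)) = (of_nat b * r) * r ^ i" by (simp add: pw_replicate algebra_simps)
    also have "of_nat b * r = of_nat a" using r ab by simp
    finally show ?thesis by (simp add: R_def pw_replicate)
  qed
  then have "pw r M' = pw r M" unfolding M'_def by (subst (2) MR) simp
  moreover have "size M' > size M"
  proof -
    have "size R \<le> size M" using sub by (rule size_mset_mono)
    moreover have "size (M - R) = size M - size R" using sub by (rule size_Diff_submset)
    ultimately show ?thesis unfolding M'_def R_def using ab by simp
  qed
  moreover have "a \<le> count M' (Suc i)" unfolding M'_def using ab by simp
  ultimately show ?thesis by blast
qed

lemma grow_iter:
  fixes a b :: nat
  assumes ab: "0 < a" "a < b" and r: "r = of_nat a / of_nat b" and M: "a \<le> count M i"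
  shows "\<exists>M'. pw r M' = pw r M \<and> size M' \<ge> n"
proof -
  have "\<exists>M' j. pw r M' = pw r M \<and> size M' \<ge> n \<and> a \<le> count M' j"
  proof (induction n)
    case 0 then show ?case using M by blast
  next
    case (Suc n)
    then obtain M' j where M': "pw r M' = pw r M" "size M' \<ge> n" "a \<le> count M' j" by blast
    obtain M'' where "pw r M'' = pw r M'" "size M'' > size M'" "a \<le> count M'' (Suc j)"
      using grow[OF ab r M'(3)] by blast
    then show ?case using M' by (metis Suc_le_eq le_less_trans)
  qed
  then show ?thesis by blast
qed


lemma inj_pow: "0 < r \<Longrightarrow> r < 1 \<Longrightarrow> inj (\<lambda>i::nat. (r::rat) ^ i)"
proof (rule injI)
  fix m n :: nat assume r: "0 < r" "r < 1" and e: "r ^ m = r ^ n"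
  show "m = n"
  proof (rule ccontr)
    assume "m \<noteq> n"
    then have "m < n \<or> n < m" by arith
    then show False using power_strict_decreasing[of m n r] power_strict_decreasing[of n m r] r e by auto
  qed
qed

lemma part1_inf:
  fixes a b :: nat
  assumes ab: "2 \<le> a" "a < b" and cop: "coprime a b" and r: "r = of_nat a / of_nat b"
    and M: "pw r M = x" "a \<le> count M i" and x0: "x \<noteq> 0"
  shows "elasticity (S r) x = \<infinity>"
proof -
  define L where "L = lengths (S r) x"
  have inL: "size M' \<in> L" if "pw r M' = x" for M'
  proof -
    have "image_mset (\<lambda>i. r ^ i) M' \<in> factorizations (S r) (pw r M')"
      using fact_of_atoms atom1[OF ab cop r] by blast
    then show ?thesis unfolding L_def lengths_def using that by (metis image_eqI size_image_mset)
  qed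
  have unb: "\<forall>n. \<exists>l\<in>L. l \<ge> n"
  proof
    fix n
    obtain M' where "pw r M' = pw r M" "size M' \<ge> n" using grow_iter[OF _ ab(2) r M(2), of n] ab by auto
    then show "\<exists>l\<in>L. l \<ge> n" using inL M(1) by metis
  qed
  have ne: "L \<noteq> {}" using inL M(1) by blast
  have "Inf L \<in> L" using ne by (rule Inf_nat_def1)
  then have "Inf L > 0" using lengths_pos[OF x0] unfolding L_def by blast
  have "elasticity (S r) x = \<infinity> / ereal (real (Inf L))"
    using x0 SUP_unbounded[OF unb] unfolding elasticity_def L_def by simp
  then show ?thesis by simp
qed

lemma part1_fin:
  fixes a b :: nat
  assumes ab: "2 \<le> a" "a < b" and cop: "coprime a b" and r: "r = of_nat a / of_nat b"
    and at: "atomic (S r)" and x: "x \<in> S r" "x \<noteq> 0"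
    and fin: "\<forall>z\<in>factorizations (S r) x. \<forall>i. count z (r ^ i) < a"
  shows "elasticity (S r) x = 1"
proof -
  have rpos: "r > 0" and r1: "r < 1" using r ab by auto
  have inj: "inj (\<lambda>i::nat. r ^ i)" using inj_pow[OF rpos r1] .
  define L where "L = lengths (S r) x"
  have ne: "L \<noteq> {}" using at x unfolding atomic_def L_def by blast
  obtain l where l: "l \<in> L" using ne by blast
  have all: "l' = l" if l'L: "l' \<in> L" for l'
  proof -
    obtain z1 where z1: "z1 \<in> factorizations (S r) x" "l = size z1" using l unfolding L_def lengths_def by auto
    obtain z2 where z2: "z2 \<in> factorizations (S r) x" "l' = size z2" using l'L unfolding L_def lengths_def by auto
    obtain M1 where M1: "z1 = image_mset (\<lambda>i. r ^ i) M1" "x = pw r M1" using fact_repr[OF rpos z1(1)] by blast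
    obtain M2 where M2: "z2 = image_mset (\<lambda>i. r ^ i) M2" "x = pw r M2" using fact_repr[OF rpos z2(1)] by blast
    have c1: "count M1 i < a" for i using fin z1(1) count_image_inj[OF inj, of M1 i] M1(1) by metis
    have c2: "count M2 i < a" for i using fin z2(1) count_image_inj[OF inj, of M2 i] M2(1) by metis
    define N where "N = sum_mset M1 + sum_mset M2"
    have s1: "set_mset M1 \<subseteq> {..<Suc N}" using mem_le_sum_mset unfolding N_def by fastforce
    have s2: "set_mset M2 \<subseteq> {..<Suc N}" using mem_le_sum_mset unfolding N_def by fastforce
    have v: "vl r (Suc N) (count M1) = vl r (Suc N) (count M2)"
      using pw_vl[OF s1, of r] pw_vl[OF s2, of r] M1(2) M2(2) by simp
    have "\<forall>i<Suc N. count M1 i = count M2 i"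
      using uniq[of b a r "Suc N" "count M1" "count M2"] ab cop r v c1 c2 by auto
    then have "M1 = M2"
    proof (intro multiset_eqI)
      fix i assume h: "\<forall>i<Suc N. count M1 i = count M2 i"
      show "count M1 i = count M2 i"
      proof (cases "i < Suc N")
        case True then show ?thesis using h by blast
      next
        case False
        then have "i \<notin># M1" "i \<notin># M2" using s1 s2 by auto
        then show ?thesis by (simp add: not_in_iff)
      qed
    qed
    then show ?thesis using z1 z2 M1 M2 by simp
  qed
  have b1: "\<forall>l'\<in>L. l' \<le> l" "\<forall>l'\<in>L. l \<le> l'" using all by auto
  have l0: "l > 0" using lengths_pos[OF x(2)] l unfolding L_def by blast
  have "elasticity (S r) x = (SUP l\<in>L. ereal (real l)) / ereal (real (Inf L))"
    using x(2) unfolding elasticity_def L_def by simp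
  also have "\<dots> = ereal (of_rat (of_nat l / of_nat l))"
    by (rule ratio_ereal[OF l b1(1) l b1(2) l0])
  also have "(of_nat l / of_nat l :: rat) = 1" using l0 by simp
  finally show ?thesis by simp
qed


lemma qo: "quotient_of r = (numer r, denom r)" by (simp add: numer_def denom_def)

lemma part1:
  fixes r :: rat
  assumes rpos: "r > 0" and r1: "r < 1" and at: "atomic (S r)"
  shows "elasticity_set (S r) = {1, \<infinity>} \<and> \<not> fully_elastic (S r)"
proof -
  have dpos: "denom r > 0" using quotient_of_denom_pos[OF qo] .
  have rq: "r = of_int (numer r) / of_int (denom r)" using quotient_of_div[OF qo] .
  have copi: "coprime (numer r) (denom r)" using quotient_of_coprime[OF qo] .
  have npos: "numer r > 0"
  proof -
    have "0 < of_int (numer r) / (of_int (denom r) :: rat)" using rpos rq by simp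
    then show ?thesis using dpos by (simp add: zero_less_divide_iff)
  qed
  have nd: "numer r < denom r"
  proof -
    have "of_int (numer r) / (of_int (denom r) :: rat) < 1" using r1 rq by simp
    then show ?thesis using dpos by (simp add: divide_less_eq)
  qed
  define a where "a = nat (numer r)"
  define b where "b = nat (denom r)"
  have r: "r = of_nat a / of_nat b" using rq npos dpos unfolding a_def b_def by simp
  have ab: "0 < a" "a < b" using npos nd unfolding a_def b_def by auto
  have cop: "coprime a b"
  proof -
    have "coprime (int a) (int b)" using copi npos dpos unfolding a_def b_def by simp
    then show ?thesis by (simp only: coprime_int_iff)
  qed
  have a2: "a \<ge> 2"
  proof (rule ccontr)
    assume "\<not> a \<ge> 2" then have a1: "a = 1" using ab by simp
    then have "b \<ge> 2" using ab by simp
    moreover have "r = 1 / of_nat b" using r a1 by simp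
    ultimately have noat: "atoms (S r) = {}" by (rule no_atoms)
    have "(1::rat) \<in> S r" using nat_in_S[of 1 r] by simp
    then have "lengths (S r) 1 \<noteq> {}" using at unfolding atomic_def by simp
    then obtain z where "z \<in> factorizations (S r) 1" unfolding lengths_def by auto
    then have "set_mset z \<subseteq> {}" "sum_mset z = 1" using noat unfolding factorizations_def by auto
    then show False by simp
  qed
  have dich: "elasticity (S r) x \<in> {1, \<infinity>}" if xS: "x \<in> S r" for x
  proof (cases "x = 0")
    case True then show ?thesis by simp
  next
    case x0: False
    show ?thesis
    proof (cases "\<forall>z\<in>factorizations (S r) x. \<forall>i. count z (r ^ i) < a")
      case True
      then show ?thesis using part1_fin[OF a2 ab(2) cop r at xS x0] by simp
    next
      case False
      then obtain z i where z: "z \<in> factorizations (S r) x" "a \<le> count z (r ^ i)" by (auto simp: not_less)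
      obtain M where M: "z = image_mset (\<lambda>i. r ^ i) M" "x = pw r M" using fact_repr[OF rpos z(1)] by blast
      have "count z (r ^ i) = count M i" using M(1) count_image_inj[OF inj_pow[OF rpos r1]] by simp
      then have "a \<le> count M i" using z(2) by simp
      then show ?thesis using part1_inf[OF a2 ab(2) cop r M(2)[symmetric] _ x0] by simp
    qed
  qed
  have infin: "\<infinity> \<in> elasticity_set (S r)"
  proof -
    define M where "M = replicate_mset a (0::nat)"
    have "pw r M \<noteq> 0" using pw_eq0[OF rpos] ab unfolding M_def by simp
    moreover have "a \<le> count M 0" unfolding M_def by simp
    ultimately have "elasticity (S r) (pw r M) = \<infinity>"
      using part1_inf[OF a2 ab(2) cop r refl] by blast
    moreover have "pw r M \<in> S r" using S_iff by blast
    ultimately show ?thesis unfolding elasticity_set_def by (metis image_eqI)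
  qed
  have E: "elasticity_set (S r) = {1, \<infinity>}"
  proof (intro equalityI subsetI)
    fix e assume "e \<in> elasticity_set (S r)"
    then show "e \<in> {1, \<infinity>}" using dich unfolding elasticity_set_def by auto
  next
    fix e :: ereal assume "e \<in> {1, \<infinity>}"
    moreover have "1 \<in> elasticity_set (S r)" unfolding elasticity_set_def
      using S.zero by (metis elasticity_zero image_eqI)
    ultimately show "e \<in> elasticity_set (S r)" using infin by auto
  qed
  have "\<not> fully_elastic (S r)"
  proof
    assume "fully_elastic (S r)"
    then have "{1, \<infinity>} - {\<infinity>} = {ereal (of_rat q) | q. 1 \<le> q}"
      using E unfolding fully_elastic_def by simp
    moreover have "ereal (of_rat 2) \<in> {ereal (of_rat q) | q. 1 \<le> q}"
      by (rule CollectI, rule exI[of _ 2]) simp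
    ultimately have "ereal (of_rat 2) \<in> {1, \<infinity>} - {\<infinity>}" by blast
    then have "ereal (of_rat 2) = 1" by blast
    then show False by simp
  qed
  then show ?thesis using E by simp
qed


theorem proposition4p4:
  fixes r :: rat
  assumes "r > 0" and "atomic (S r)"
  shows "(r < 1 \<longrightarrow> elasticity_set (S r) = {1, \<infinity>} \<and> \<not> fully_elastic (S r))
       \<and> (r \<in> \<nat> \<longrightarrow> elasticity_set (S r) = {1} \<and> fully_elastic (S r))
       \<and> (r \<notin> \<nat> \<and> numer r = denom r + 1 \<longrightarrow>
            elasticity_set (S r) = {ereal (of_rat q) | q. 1 \<le> q} \<and> fully_elastic (S r))"
proof (intro conjI impI)
  assume "r < 1" then show "elasticity_set (S r) = {1, \<infinity>}" "\<not> fully_elastic (S r)"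
    using part1[OF assms(1) _ assms(2)] by auto
next
  assume "r \<in> \<nat>" then show "elasticity_set (S r) = {1}" "fully_elastic (S r)"
    using part2[OF _ assms(1) assms(2)] by auto
next
  assume h: "r \<notin> \<nat> \<and> numer r = denom r + 1"
  have dpos: "denom r > 0" using quotient_of_denom_pos[OF qo] .
  have rq: "r = of_int (numer r) / of_int (denom r)" using quotient_of_div[OF qo] .
  define d where "d = nat (denom r)"
  have r: "r = of_nat (d+1) / of_nat d" using rq h dpos unfolding d_def by (simp add: add.commute)
  have "d \<noteq> 1"
  proof
    assume "d = 1" then have "r = of_nat 2" using r by simp
    then show False using h by (metis of_nat_in_Nats)
  qed
  then have d2: "d \<ge> 2" using dpos unfolding d_def by linarith
  show "elasticity_set (S r) = {ereal (of_rat q) | q. 1 \<le> q}" "fully_elastic (S r)"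
    using part3[OF d2 r assms(2)] by auto
qed


end
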